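(* Let $(\mathbb{T},G)$ be a minimal equicontinuous topological dynamical system with $\mathbb{T}$ infinite, and let $\theta,\theta'\in\mathbb{T}$. Then every neighbourhood of the neutral element $e$ of $E(\mathbb{T})$ contains some $g\in G$ (regarded as an element of $E(\mathbb{T})$) with $g\theta\neq\theta$ and $g\theta'\neq\theta'$.
   Context: A topological dynamical system $(X,G)$ consists of a topological group $G$ acting jointly continuously on the left on a compact Hausdorff space $X$; we write $gx$ for the action. It is minimal if every orbit $Gx$ is dense in $X$, and equicontinuous if the family of maps $\{x\mapsto gx: g\in G\}$ is equicontinuous with respect to the unique uniformity of $X$. The Ellis semigroup $E(X)$ is the closure of $\{x\mapsto gx:g\in G\}$ in $X^X$ with the topology of pointwise convergence; elements of $G$ are regarded as elements of $E(X)$. For $(\mathbb{T},G)$ minimal and equicontinuous it is known that $E(\mathbb{T})$ is a compact Hausdorff topological group consisting of homeomorphisms of $\mathbb{T}$, acting jointly continuously and transitively on $\mathbb{T}$ and extending the action of $G$. *)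

theory Defs
  imports "HOL-Analysis.Analysis" "HOL-Algebra.Group"
begin

definition topological_group :: "('g, 'm) monoid_scheme \<Rightarrow> 'g topology \<Rightarrow> bool" where
  "topological_group G T \<longleftrightarrow> group G \<and> topspace T = carrier G \<and>
     continuous_map (prod_topology T T) T (\<lambda>(a, b). a \<otimes>\<^bsub>G\<^esub> b) \<and>
     continuous_map T T (\<lambda>a. inv\<^bsub>G\<^esub> a)"

definition tds :: "('g, 'm) monoid_scheme \<Rightarrow> 'g topology \<Rightarrow> 'a topology \<Rightarrow> ('g \<Rightarrow> 'a \<Rightarrow> 'a) \<Rightarrow> bool" where
  "tds G T X act \<longleftrightarrow> topological_group G T \<and> compact_space X \<and> Hausdorff_space X \<and>
     (\<forall>g\<in>carrier G. \<forall>x\<in>topspace X. act g x \<in> topspace X) \<and>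
     (\<forall>x\<in>topspace X. act \<one>\<^bsub>G\<^esub> x = x) \<and>
     (\<forall>g\<in>carrier G. \<forall>h\<in>carrier G. \<forall>x\<in>topspace X. act (g \<otimes>\<^bsub>G\<^esub> h) x = act g (act h x)) \<and>
     continuous_map (prod_topology T X) X (\<lambda>(g, x). act g x)"

definition minimal_action :: "('g, 'm) monoid_scheme \<Rightarrow> 'a topology \<Rightarrow> ('g \<Rightarrow> 'a \<Rightarrow> 'a) \<Rightarrow> bool" where
  "minimal_action G X act \<longleftrightarrow>
     (\<forall>x\<in>topspace X. X closure_of ((\<lambda>g. act g x) ` carrier G) = topspace X)"

text \<open>Equicontinuity of the family of maps with respect to the unique uniformity of the
compact Hausdorff space X, whose entourages are exactly the neighbourhoods of the diagonal
in X \<times> X (it suffices to test open neighbourhoods of the diagonal).\<close>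
definition equicontinuous_action :: "('g, 'm) monoid_scheme \<Rightarrow> 'a topology \<Rightarrow> ('g \<Rightarrow> 'a \<Rightarrow> 'a) \<Rightarrow> bool" where
  "equicontinuous_action G X act \<longleftrightarrow>
     (\<forall>x\<in>topspace X. \<forall>W. openin (prod_topology X X) W \<and>
         (\<forall>z\<in>topspace X. (z, z) \<in> W) \<longrightarrow>
       (\<exists>U. openin X U \<and> x \<in> U \<and>
          (\<forall>y\<in>U. \<forall>g\<in>carrier G. (act g x, act g y) \<in> W)))"

text \<open>The topology of pointwise convergence on X^X (maps are represented extensionally,
i.e. restricted to topspace X).\<close>
definition pointwise_top :: "'a topology \<Rightarrow> ('a \<Rightarrow> 'a) topology" where
  "pointwise_top X = product_topology (\<lambda>_. X) (topspace X)"

definition act_map :: "('g \<Rightarrow> 'a \<Rightarrow> 'a) \<Rightarrow> 'a topology \<Rightarrow> 'g \<Rightarrow> ('a \<Rightarrow> 'a)" where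
  "act_map act X g = restrict (act g) (topspace X)"

definition ellis_semigroup :: "('g, 'm) monoid_scheme \<Rightarrow> 'a topology \<Rightarrow> ('g \<Rightarrow> 'a \<Rightarrow> 'a) \<Rightarrow> ('a \<Rightarrow> 'a) set" where
  "ellis_semigroup G X act = (pointwise_top X) closure_of (act_map act X ` carrier G)"

definition ellis_top :: "('g, 'm) monoid_scheme \<Rightarrow> 'a topology \<Rightarrow> ('g \<Rightarrow> 'a \<Rightarrow> 'a) \<Rightarrow> ('a \<Rightarrow> 'a) topology" where
  "ellis_top G X act = subtopology (pointwise_top X) (ellis_semigroup G X act)"

definition ellis_unit :: "'a topology \<Rightarrow> ('a \<Rightarrow> 'a)" where
  "ellis_unit X = restrict id (topspace X)"

definition neighbourhood_in :: "'b topology \<Rightarrow> 'b set \<Rightarrow> 'b \<Rightarrow> bool" where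
  "neighbourhood_in S N p \<longleftrightarrow> N \<subseteq> topspace S \<and> (\<exists>U. openin S U \<and> p \<in> U \<and> U \<subseteq> N)"

end

theory Submission imports Defs begin

lemma halve:
  assumes cX: "compact_space X" and hX: "Hausdorff_space X"
    and W0: "openin (prod_topology X X) W0" and dW0: "\<forall>z\<in>topspace X. (z,z) \<in> W0"
  shows "\<exists>W. openin (prod_topology X X) W \<and> (\<forall>z\<in>topspace X. (z,z) \<in> W) \<and>
             (\<forall>a b c. (a,b) \<in> W \<longrightarrow> (a,c) \<in> W \<longrightarrow> (b,c) \<in> W0)"
proof -
  have "\<forall>z\<in>topspace X. \<exists>A. openin X A \<and> z \<in> A \<and> A \<times> A \<subseteq> W0"
  proof
    fix z assume z: "z \<in> topspace X"
    then obtain U V where "openin X U" "openin X V" "z \<in> U" "z \<in> V" "U \<times> V \<subseteq> W0"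
      using W0 dW0 unfolding openin_prod_topology_alt by meson
    then show "\<exists>A. openin X A \<and> z \<in> A \<and> A \<times> A \<subseteq> W0"
      by (intro exI[of _ "U \<inter> V"]) auto
  qed
  then obtain A where A: "\<And>z. z \<in> topspace X \<Longrightarrow> openin X (A z) \<and> z \<in> A z \<and> A z \<times> A z \<subseteq> W0"
    by metis
  have reg: "regular_space X" using cX hX compact_Hausdorff_imp_regular_space by blast
  have "\<forall>z\<in>topspace X. \<exists>B. openin X B \<and> z \<in> B \<and> X closure_of B \<subseteq> A z"
  proof
    fix z assume z: "z \<in> topspace X"
    have "closedin X (topspace X - A z)" using A[OF z] by blast
    moreover have "z \<in> topspace X - (topspace X - A z)" using A[OF z] z by blast
    ultimately obtain U where "openin X U" "z \<in> U" "disjnt (topspace X - A z) (X closure_of U)"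
      using reg unfolding regular_space by blast
    then show "\<exists>B. openin X B \<and> z \<in> B \<and> X closure_of B \<subseteq> A z"
      using closure_of_subset_topspace[of X U] by (intro exI[of _ U]) (auto simp: disjnt_iff)
  qed
  then obtain B where B: "\<And>z. z \<in> topspace X \<Longrightarrow> openin X (B z) \<and> z \<in> B z \<and> X closure_of (B z) \<subseteq> A z"
    by metis
  have "\<forall>U\<in>B ` topspace X. openin X U" using B by auto
  moreover have "topspace X \<subseteq> \<Union>(B ` topspace X)" using B by auto
  ultimately obtain \<F> where F: "finite \<F>" "\<F> \<subseteq> B ` topspace X" "topspace X \<subseteq> \<Union>\<F>"
    using cX unfolding compact_space_alt by meson
  then obtain Z where Z: "Z \<subseteq> topspace X" "finite Z" "\<F> = B ` Z"
    by (meson finite_subset_image)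
  define P where "P z = (A z \<times> A z) \<union> ((topspace X - X closure_of B z) \<times> (topspace X - X closure_of B z))" for z
  define W where "W = \<Inter>(insert (topspace X \<times> topspace X) (P ` Z))"
  have "openin (prod_topology X X) W"
    unfolding W_def
  proof (rule openin_Inter)
    show "finite (insert (topspace X \<times> topspace X) (P ` Z))" using Z by simp
  next
    fix S assume "S \<in> insert (topspace X \<times> topspace X) (P ` Z)"
    then show "openin (prod_topology X X) S"
    proof
      assume "S = topspace X \<times> topspace X" then show ?thesis
        by (metis openin_topspace topspace_prod_topology)
    next
      assume "S \<in> P ` Z"
      then obtain z where z: "z \<in> Z" "S = P z" by blast
      have zz: "z \<in> topspace X" using z Z by blast
      have o1: "openin X (topspace X - X closure_of B z)" by (simp add: openin_diff)
      show ?thesis unfolding z P_def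
        by (intro openin_Un) (simp_all add: openin_prod_Times_iff A[OF zz] o1)
    qed
  qed auto
  moreover have "\<forall>x\<in>topspace X. (x,x) \<in> W"
  proof
    fix x assume x: "x \<in> topspace X"
    have "(x,x) \<in> P z" if "z \<in> Z" for z
    proof -
      have zz: "z \<in> topspace X" using that Z by blast
      show ?thesis using B[OF zz] x unfolding P_def by auto
    qed
    then show "(x,x) \<in> W" using x unfolding W_def by auto
  qed
  moreover have "(b,c) \<in> W0" if ab: "(a,b) \<in> W" and ac: "(a,c) \<in> W" for a b c
  proof -
    have "a \<in> topspace X" using ab unfolding W_def by auto
    then obtain z where z: "z \<in> Z" "a \<in> B z" using F Z by auto
    have zz: "z \<in> topspace X" using z Z by blast
    have "a \<in> X closure_of B z" using z B[OF zz] closure_of_subset[of "B z" X]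
      by (meson openin_subset subsetD)
    moreover have "(a,b) \<in> P z" "(a,c) \<in> P z" using ab ac z unfolding W_def by auto
    ultimately have "b \<in> A z" "c \<in> A z" unfolding P_def by auto
    then show ?thesis using A[OF zz] by auto
  qed
  ultimately show ?thesis by blast
qed


context
  fixes G :: "('g, 'm) monoid_scheme" and T :: "'g topology"
    and X :: "'a topology" and act :: "'g \<Rightarrow> 'a \<Rightarrow> 'a"
  assumes tds: "tds G T X act"
begin

lemma grp: "group G" using tds unfolding tds_def topological_group_def by blast
lemma cX: "compact_space X" using tds unfolding tds_def by blast
lemma hX: "Hausdorff_space X" using tds unfolding tds_def by blast
lemma act_in: "g \<in> carrier G \<Longrightarrow> x \<in> topspace X \<Longrightarrow> act g x \<in> topspace X"
  using tds unfolding tds_def by blast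
lemma act_one: "x \<in> topspace X \<Longrightarrow> act \<one>\<^bsub>G\<^esub> x = x"
  using tds unfolding tds_def by blast
lemma act_mult: "g \<in> carrier G \<Longrightarrow> h \<in> carrier G \<Longrightarrow> x \<in> topspace X \<Longrightarrow>
   act (g \<otimes>\<^bsub>G\<^esub> h) x = act g (act h x)"
  using tds unfolding tds_def by blast
lemma act_inv: "g \<in> carrier G \<Longrightarrow> x \<in> topspace X \<Longrightarrow> act (inv\<^bsub>G\<^esub> g) (act g x) = x"
  by (metis act_mult act_one group.inv_closed group.l_inv grp)

lemma UE:
  assumes eq: "equicontinuous_action G X act"
    and W0: "openin (prod_topology X X) W0" and dW0: "\<forall>z\<in>topspace X. (z,z) \<in> W0"
  shows "\<exists>R. openin (prod_topology X X) R \<and> (\<forall>z\<in>topspace X. (z,z) \<in> R) \<and>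
             (\<forall>a b k. (a,b) \<in> R \<longrightarrow> k \<in> carrier G \<longrightarrow> (act k a, act k b) \<in> W0)"
proof -
  obtain W where W: "openin (prod_topology X X) W" "\<forall>z\<in>topspace X. (z,z) \<in> W"
      "\<forall>a b c. (a,b) \<in> W \<longrightarrow> (a,c) \<in> W \<longrightarrow> (b,c) \<in> W0"
    using halve[OF cX hX W0 dW0] by blast
  have "\<forall>c\<in>topspace X. \<exists>U. openin X U \<and> c \<in> U \<and> (\<forall>y\<in>U. \<forall>g\<in>carrier G. (act g c, act g y) \<in> W)"
  proof
    fix c assume "c \<in> topspace X"
    then show "\<exists>U. openin X U \<and> c \<in> U \<and> (\<forall>y\<in>U. \<forall>g\<in>carrier G. (act g c, act g y) \<in> W)"
      using eq W(1,2) unfolding equicontinuous_action_def by auto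
  qed
  then obtain U where U: "\<And>c. c \<in> topspace X \<Longrightarrow> openin X (U c) \<and> c \<in> U c \<and>
      (\<forall>y\<in>U c. \<forall>g\<in>carrier G. (act g c, act g y) \<in> W)" by metis
  define R where "R = (\<Union>c\<in>topspace X. U c \<times> U c)"
  have "openin (prod_topology X X) R" unfolding R_def
  proof (rule openin_Union)
    fix S assume "S \<in> (\<lambda>c. U c \<times> U c) ` topspace X"
    then obtain c where "c \<in> topspace X" "S = U c \<times> U c" by blast
    then show "openin (prod_topology X X) S" using U by (simp add: openin_prod_Times_iff)
  qed
  moreover have "\<forall>z\<in>topspace X. (z,z) \<in> R" unfolding R_def using U by blast
  moreover have "(act k a, act k b) \<in> W0" if ab: "(a,b) \<in> R" and kG: "k \<in> carrier G" for a b k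
  proof -
    obtain c where c: "c \<in> topspace X" "a \<in> U c" "b \<in> U c" using ab unfolding R_def by blast
    then have "(act k c, act k a) \<in> W" "(act k c, act k b) \<in> W" using U kG by blast+
    then show ?thesis using W by blast
  qed
  ultimately show ?thesis by blast
qed

lemma ball_open:
  assumes R: "openin (prod_topology X X) R"
  shows "openin X {b. (a,b) \<in> R}"
proof -
  have "\<exists>T. openin X T \<and> b \<in> T \<and> T \<subseteq> {b. (a, b) \<in> R}" if b: "(a,b) \<in> R" for b
  proof -
    from R b obtain U V where UV: "openin X U" "openin X V" "a \<in> U" "b \<in> V" "U \<times> V \<subseteq> R"
      unfolding openin_prod_topology_alt by meson
    have "V \<subseteq> {b. (a, b) \<in> R}" using UV(3,5) by blast
    then show ?thesis using UV(2,4) by blast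
  qed
  then show ?thesis by (subst openin_subopen) simp
qed

lemma one_point:
  assumes eq: "equicontinuous_action G X act" and mn: "minimal_action G X act"
    and inf: "infinite (topspace X)"
    and I: "finite I" "\<And>i. i \<in> I \<Longrightarrow> p i \<in> topspace X \<and> openin X (V i) \<and> p i \<in> V i"
    and th: "\<theta> \<in> topspace X"
  shows "\<exists>g\<in>carrier G. (\<forall>i\<in>I. act g (p i) \<in> V i) \<and> act g \<theta> \<noteq> \<theta>"
proof (rule ccontr)
  assume "\<not> ?thesis"
  then have H: "\<And>g. g \<in> carrier G \<Longrightarrow> (\<forall>i\<in>I. act g (p i) \<in> V i) \<Longrightarrow> act g \<theta> = \<theta>" by blast
  have t1: "t1_space X" using hX Hausdorff_imp_t1_space by blast
  define Q where "Q i = (V i \<times> V i) \<union> ((topspace X - {p i}) \<times> topspace X)" for i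
  define W0 where "W0 = \<Inter>(insert (topspace X \<times> topspace X) (Q ` I))"
  have oW0: "openin (prod_topology X X) W0"
    unfolding W0_def
  proof (rule openin_Inter)
    show "finite (insert (topspace X \<times> topspace X) (Q ` I))" using I by simp
  next
    fix S assume "S \<in> insert (topspace X \<times> topspace X) (Q ` I)"
    then show "openin (prod_topology X X) S"
    proof
      assume "S = topspace X \<times> topspace X" then show ?thesis
        by (metis openin_topspace topspace_prod_topology)
    next
      assume "S \<in> Q ` I"
      then obtain i where i: "i \<in> I" "S = Q i" by blast
      have o1: "openin X (topspace X - {p i})"
        using t1 t1_space_openin_delete by (metis openin_topspace i(1) I(2))
      show ?thesis unfolding i Q_def
        by (intro openin_Un) (simp_all add: openin_prod_Times_iff I(2)[OF i(1)] o1)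
    qed
  qed auto
  have dW0: "\<forall>z\<in>topspace X. (z,z) \<in> W0"
  proof
    fix z assume z: "z \<in> topspace X"
    have "(z,z) \<in> Q i" if "i \<in> I" for i
      using I(2)[OF that] z unfolding Q_def by (cases "z = p i") auto
    then show "(z,z) \<in> W0" unfolding W0_def using z by blast
  qed
  obtain R where R: "openin (prod_topology X X) R" "\<forall>z\<in>topspace X. (z,z) \<in> R"
      "\<forall>a b k. (a,b) \<in> R \<longrightarrow> k \<in> carrier G \<longrightarrow> (act k a, act k b) \<in> W0"
    using UE[OF eq oW0 dW0] by metis
  obtain R' where R': "openin (prod_topology X X) R'" "\<forall>z\<in>topspace X. (z,z) \<in> R'"
      "\<forall>a b c. (a,b) \<in> R' \<longrightarrow> (a,c) \<in> R' \<longrightarrow> (b,c) \<in> R"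
    using halve[OF cX hX R(1,2)] by metis
  define bl where "bl a = {b. (a,b) \<in> R'}" for a
  have "\<forall>U\<in>bl ` topspace X. openin X U" using ball_open[OF R'(1)] unfolding bl_def by auto
  moreover have "topspace X \<subseteq> \<Union>(bl ` topspace X)" using R'(2) unfolding bl_def by auto
  ultimately obtain \<F> where F: "finite \<F>" "\<F> \<subseteq> bl ` topspace X" "topspace X \<subseteq> \<Union>\<F>"
    using cX unfolding compact_space_alt by meson
  then obtain C where C: "C \<subseteq> topspace X" "finite C" "\<F> = bl ` C"
    by (meson finite_subset_image)
  define S where "S \<sigma> = {act h \<theta> | h. h \<in> carrier G \<and> (\<forall>i\<in>I. (\<sigma> i, act h (p i)) \<in> R')}" for \<sigma>
  have Ssub: "\<exists>x. S \<sigma> \<subseteq> {x}" for \<sigma>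
  proof (cases "S \<sigma> = {}")
    case True then show ?thesis by blast
  next
    case False
    then obtain h where h: "h \<in> carrier G" "\<forall>i\<in>I. (\<sigma> i, act h (p i)) \<in> R'"
      unfolding S_def by blast
    have "act h' \<theta> = act h \<theta>" if h': "h' \<in> carrier G" "\<forall>i\<in>I. (\<sigma> i, act h' (p i)) \<in> R'" for h'
    proof -
      define k where "k = inv\<^bsub>G\<^esub> h \<otimes>\<^bsub>G\<^esub> h'"
      have ih: "inv\<^bsub>G\<^esub> h \<in> carrier G" using h grp by simp
      have k: "k \<in> carrier G" unfolding k_def using ih h' grp by (simp add: group.is_monoid monoid.m_closed)
      have "act k (p i) \<in> V i" if i: "i \<in> I" for i
      proof -
        have pi: "p i \<in> topspace X" using I(2)[OF i] by blast
        have "(act h (p i), act h' (p i)) \<in> R" using R' h h' i by blast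
        then have "(act (inv\<^bsub>G\<^esub> h) (act h (p i)), act (inv\<^bsub>G\<^esub> h) (act h' (p i))) \<in> W0"
          using R ih by blast
        then have "(p i, act k (p i)) \<in> W0" using act_inv[OF h(1) pi] act_mult[OF ih h'(1) pi]
          unfolding k_def by simp
        then have "(p i, act k (p i)) \<in> Q i" using i unfolding W0_def by blast
        then show ?thesis unfolding Q_def by blast
      qed
      then have "act k \<theta> = \<theta>" using H k by blast
      then have "act h (act k \<theta>) = act h \<theta>" by simp
      moreover have "act h (act k \<theta>) = act h' \<theta>"
      proof -
        have "act h (act k \<theta>) = act (h \<otimes>\<^bsub>G\<^esub> k) \<theta>" using act_mult h k th by simp
        also have "h \<otimes>\<^bsub>G\<^esub> k = h'" using group.inv_solve_left[OF grp k h(1) h'(1)] k_def by simp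
        finally show ?thesis .
      qed
      ultimately show ?thesis by simp
    qed
    then show ?thesis unfolding S_def by blast
  qed
  have fin: "finite (S \<sigma>)" for \<sigma> proof -
    obtain x where "S \<sigma> \<subseteq> {x}" using Ssub by blast
    then show ?thesis by (rule finite_subset) simp
  qed
  have orb: "(\<lambda>g. act g \<theta>) ` carrier G \<subseteq> (\<Union>\<sigma>\<in>PiE I (\<lambda>_. C). S \<sigma>)"
  proof
    fix y assume "y \<in> (\<lambda>g. act g \<theta>) ` carrier G"
    then obtain h where h: "h \<in> carrier G" "y = act h \<theta>" by blast
    have "\<forall>i\<in>I. \<exists>c\<in>C. (c, act h (p i)) \<in> R'"
    proof
      fix i assume i: "i \<in> I"
      have "act h (p i) \<in> topspace X" using act_in h I(2)[OF i] by blast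
      then show "\<exists>c\<in>C. (c, act h (p i)) \<in> R'" using F C unfolding bl_def by auto
    qed
    then obtain f where f: "\<forall>i\<in>I. f i \<in> C \<and> (f i, act h (p i)) \<in> R'" by metis
    define \<sigma> where "\<sigma> = restrict f I"
    have "\<sigma> \<in> PiE I (\<lambda>_. C)" using f unfolding \<sigma>_def by auto
    moreover have "y \<in> S \<sigma>" unfolding S_def \<sigma>_def using h f by auto
    ultimately show "y \<in> (\<Union>\<sigma>\<in>PiE I (\<lambda>_. C). S \<sigma>)" by blast
  qed
  have "finite ((\<lambda>g. act g \<theta>) ` carrier G)"
  proof (rule finite_subset[OF orb])
    have "finite (PiE I (\<lambda>_. C))" using I(1) C(2) by (simp add: finite_PiE)
    then show "finite (\<Union>\<sigma>\<in>PiE I (\<lambda>_. C). S \<sigma>)" using fin by blast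
  qed
  moreover have "(\<lambda>g. act g \<theta>) ` carrier G \<subseteq> topspace X" using act_in th by blast
  ultimately have "closedin X ((\<lambda>g. act g \<theta>) ` carrier G)"
    using closedin_Hausdorff_finite hX by blast
  then have "X closure_of ((\<lambda>g. act g \<theta>) ` carrier G) = (\<lambda>g. act g \<theta>) ` carrier G"
    by (rule closure_of_closedin)
  moreover have "X closure_of ((\<lambda>g. act g \<theta>) ` carrier G) = topspace X"
    using mn th unfolding minimal_action_def by blast
  ultimately have "topspace X = (\<lambda>g. act g \<theta>) ` carrier G" by simp
  with \<open>finite ((\<lambda>g. act g \<theta>) ` carrier G)\<close> inf show False by simp
qed

lemma two_point:
  assumes eq: "equicontinuous_action G X act" and mn: "minimal_action G X act"
    and inf: "infinite (topspace X)"
    and I: "finite I" "\<And>i. i \<in> I \<Longrightarrow> p i \<in> topspace X \<and> openin X (V i) \<and> p i \<in> V i"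
    and th: "\<theta> \<in> topspace X" and th': "\<theta>' \<in> topspace X"
  shows "\<exists>g\<in>carrier G. (\<forall>i\<in>I. act g (p i) \<in> V i) \<and> act g \<theta> \<noteq> \<theta> \<and> act g \<theta>' \<noteq> \<theta>'"
proof -
  obtain g1 where g1: "g1 \<in> carrier G" "\<forall>i\<in>I. act g1 (p i) \<in> V i" "act g1 \<theta> \<noteq> \<theta>"
    using one_point[OF eq mn inf, where I=I and p=p and V=V and \<theta>=\<theta>] I th by blast
  show ?thesis
  proof (cases "act g1 \<theta>' = \<theta>'")
    case False then show ?thesis using g1 by blast
  next
    case True
    define y where "y = act g1 \<theta>"
    have y: "y \<in> topspace X" unfolding y_def using act_in g1(1) th by blast
    define Ob where "Ob = topspace X - {\<theta>}"
    have t1: "t1_space X" using hX Hausdorff_imp_t1_space by blast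
    have oO: "openin X Ob" unfolding Ob_def using t1 t1_space_openin_delete th by (metis openin_topspace)
    have yO: "y \<in> Ob" unfolding Ob_def using y g1(3) y_def by auto
    define I' where "I' = insert None (Some ` I)"
    define p' where "p' = case_option y (\<lambda>i. act g1 (p i))"
    define V' where "V' = case_option Ob V"
    have fI': "finite I'" unfolding I'_def using I(1) by simp
    have I': "p' j \<in> topspace X \<and> openin X (V' j) \<and> p' j \<in> V' j" if j: "j \<in> I'" for j
    proof (cases j)
      case None then show ?thesis unfolding p'_def V'_def using y oO yO by simp
    next
      case (Some i)
      then have i: "i \<in> I" using j unfolding I'_def by blast
      then show ?thesis unfolding p'_def V'_def Some using I(2)[OF i] g1(2) act_in g1(1)
        by (simp add: subsetD openin_subset)
    qed
    obtain h where h: "h \<in> carrier G" "\<forall>j\<in>I'. act h (p' j) \<in> V' j" "act h \<theta>' \<noteq> \<theta>'"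
      using one_point[OF eq mn inf, where I=I' and p=p' and V=V' and \<theta>=\<theta>'] fI' I' th' by blast
    define g where "g = h \<otimes>\<^bsub>G\<^esub> g1"
    have gG: "g \<in> carrier G" unfolding g_def using h(1) g1(1) grp
      by (simp add: group.is_monoid monoid.m_closed)
    have "act g (p i) \<in> V i" if i: "i \<in> I" for i
    proof -
      have "act h (p' (Some i)) \<in> V' (Some i)" using h(2) i unfolding I'_def by blast
      then show ?thesis unfolding g_def p'_def V'_def
        using act_mult[OF h(1) g1(1)] I(2)[OF i] by simp
    qed
    moreover have "act g \<theta> \<noteq> \<theta>"
    proof -
      have "act h (p' None) \<in> V' None" using h(2) unfolding I'_def by blast
      then have "act h y \<in> Ob" unfolding p'_def V'_def by simp
      then show ?thesis unfolding g_def Ob_def y_def using act_mult[OF h(1) g1(1) th] by simp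
    qed
    moreover have "act g \<theta>' \<noteq> \<theta>'"
      unfolding g_def using act_mult[OF h(1) g1(1) th'] True h(3) by simp
    ultimately show ?thesis using gG by blast
  qed
qed

end


theorem mainTheorem3:
  fixes G :: "('g, 'm) monoid_scheme" and T :: "'g topology"
    and X :: "'a topology" and act :: "'g \<Rightarrow> 'a \<Rightarrow> 'a"
    and \<theta> \<theta>' :: 'a and N :: "('a \<Rightarrow> 'a) set"
  assumes "tds G T X act"
    and "minimal_action G X act"
    and "equicontinuous_action G X act"
    and "infinite (topspace X)"
    and "\<theta> \<in> topspace X" and "\<theta>' \<in> topspace X"
    and "neighbourhood_in (ellis_top G X act) N (ellis_unit X)"
  shows "\<exists>g\<in>carrier G. act_map act X g \<in> N \<and> act g \<theta> \<noteq> \<theta> \<and> act g \<theta>' \<noteq> \<theta>'"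
proof -
  note tds = assms(1)
  obtain U where U: "openin (ellis_top G X act) U" "ellis_unit X \<in> U" "U \<subseteq> N"
    using assms(7) unfolding neighbourhood_in_def by blast
  obtain U0 where U0: "openin (pointwise_top X) U0" "U = U0 \<inter> ellis_semigroup G X act"
    using U(1) unfolding ellis_top_def openin_subtopology by blast
  have u0: "ellis_unit X \<in> U0" using U0 U(2) by blast
  obtain Vb where Vb: "ellis_unit X \<in> (\<Pi>\<^sub>E i\<in>topspace X. Vb i)" "\<forall>i. openin X (Vb i)"
      "finite {i. Vb i \<noteq> topspace X}" "(\<Pi>\<^sub>E i\<in>topspace X. Vb i) \<subseteq> U0"
    using product_topology_open_contains_basis[OF U0(1)[unfolded pointwise_top_def] u0] by metis
  define I where "I = {i. Vb i \<noteq> topspace X} \<inter> topspace X"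
  have fI: "finite I" unfolding I_def using Vb(3) by simp
  have I2: "id i \<in> topspace X \<and> openin X (Vb i) \<and> id i \<in> Vb i" if "i \<in> I" for i
  proof -
    have iX: "i \<in> topspace X" using that unfolding I_def by blast
    have "ellis_unit X i \<in> Vb i" using Vb(1) iX by blast
    then show ?thesis using iX Vb(2) unfolding ellis_unit_def by simp
  qed
  obtain g where g: "g \<in> carrier G" "\<forall>i\<in>I. act g (id i) \<in> Vb i" "act g \<theta> \<noteq> \<theta>" "act g \<theta>' \<noteq> \<theta>'"
    using two_point[OF tds assms(3,2,4), where I=I and p=id and V=Vb and \<theta>=\<theta> and \<theta>'=\<theta>'] fI I2 assms(5,6) by blast
  have inPi: "act_map act X g \<in> (\<Pi>\<^sub>E i\<in>topspace X. Vb i)"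
  proof -
    have "act g i \<in> Vb i" if iX: "i \<in> topspace X" for i
    proof (cases "i \<in> I")
      case True then show ?thesis using g(2) by simp
    next
      case False then have "Vb i = topspace X" unfolding I_def using iX by blast
      then show ?thesis using act_in[OF tds g(1) iX] by simp
    qed
    then show ?thesis unfolding act_map_def by auto
  qed
  have "act_map act X ` carrier G \<subseteq> topspace (pointwise_top X)"
  proof
    fix f assume "f \<in> act_map act X ` carrier G"
    then obtain k where k: "k \<in> carrier G" "f = act_map act X k" by blast
    have "f \<in> (\<Pi>\<^sub>E i\<in>topspace X. topspace X)"
      unfolding k(2) act_map_def using act_in[OF tds k(1)] by auto
    then show "f \<in> topspace (pointwise_top X)" unfolding pointwise_top_def by simp
  qed
  then have "act_map act X g \<in> ellis_semigroup G X act"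
    unfolding ellis_semigroup_def using closure_of_subset g(1) by blast
  then have "act_map act X g \<in> U" using U0 Vb(4) inPi by blast
  then show ?thesis using U(3) g by blast
qed

end
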